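(* Let $G=(V,E,w)$ be a connected edge-weighted graph with positive rational weights and at least two vertices. A set $S\subseteq V$ is a weighted partial positive influence connected dominating set (WPPICDS) if and only if $f(S)=h_{\max}+\frac{|V|-2}{L}$, where $f=h+c$ and $h_{\max}=\max_{X\subseteq V}h(X)$.
   Context: $N_A(v)=N(v)\cap A$, $W_A(v)=\sum_{u\in N_A(v)}w_{(v,u)}$, $W(v)=W_V(v)$. $h(A)=\sum_{v\in V}h_A(v)$ with $h_A(v)=W(v)/2$ if $v\in A$ or $W_A(v)\ge W(v)/2$, and $h_A(v)=W_A(v)$ otherwise. $L=\max_v l(v)$, where $l(v)$ is the lcm of the denominators of the reduced fractions $W(v)/2$ and of the weights of edges incident to $v$. $p(A)$ is the number of connected components of $G[A]$ ($p(\emptyset)=0$), $q(A)$ the number of connected components of the spanning subgraph $(V,\{e\in E: e\text{ has at least one endpoint in }A\})$, and $c(A)=\frac1L(|V|-q(A)-p(A))$. A WPPICDS is a set $S\subseteq V$ such that every $v\in V\setminus S$ satisfies $W_S(v)\ge W(v)/2$ and $G[S]$ is connected. *)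

theory Defs
  imports Complex_Main
begin

definition wgraph :: "'a set \<Rightarrow> ('a \<Rightarrow> 'a \<Rightarrow> bool) \<Rightarrow> ('a \<Rightarrow> 'a \<Rightarrow> rat) \<Rightarrow> bool" where
  "wgraph V E w \<longleftrightarrow> finite V \<and> (\<forall>u v. E u v \<longrightarrow> u \<in> V \<and> v \<in> V) \<and>
     (\<forall>u v. E u v \<longrightarrow> E v u) \<and> (\<forall>v. \<not> E v v) \<and> (\<forall>u v. w u v = w v u)"

definition pos_weights :: "('a \<Rightarrow> 'a \<Rightarrow> bool) \<Rightarrow> ('a \<Rightarrow> 'a \<Rightarrow> rat) \<Rightarrow> bool" where
  "pos_weights E w \<longleftrightarrow> (\<forall>u v. E u v \<longrightarrow> w u v > 0)"

definition reach_in :: "('a \<Rightarrow> 'a \<Rightarrow> bool) \<Rightarrow> 'a set \<Rightarrow> 'a \<Rightarrow> 'a \<Rightarrow> bool" where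
  "reach_in E A = (\<lambda>x y. E x y \<and> x \<in> A \<and> y \<in> A)\<^sup>*\<^sup>*"

definition connected_set :: "('a \<Rightarrow> 'a \<Rightarrow> bool) \<Rightarrow> 'a set \<Rightarrow> bool" where
  "connected_set E A \<longleftrightarrow> A \<noteq> {} \<and> (\<forall>x\<in>A. \<forall>y\<in>A. reach_in E A x y)"

definition nbhd :: "('a \<Rightarrow> 'a \<Rightarrow> bool) \<Rightarrow> 'a \<Rightarrow> 'a set" where
  "nbhd E v = {u. E v u}"

definition WA :: "('a \<Rightarrow> 'a \<Rightarrow> bool) \<Rightarrow> ('a \<Rightarrow> 'a \<Rightarrow> rat) \<Rightarrow> 'a set \<Rightarrow> 'a \<Rightarrow> rat" where
  "WA E w A v = (\<Sum>u\<in>nbhd E v \<inter> A. w v u)"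

definition Wt :: "'a set \<Rightarrow> ('a \<Rightarrow> 'a \<Rightarrow> bool) \<Rightarrow> ('a \<Rightarrow> 'a \<Rightarrow> rat) \<Rightarrow> 'a \<Rightarrow> rat" where
  "Wt V E w v = WA E w V v"

definition hA :: "'a set \<Rightarrow> ('a \<Rightarrow> 'a \<Rightarrow> bool) \<Rightarrow> ('a \<Rightarrow> 'a \<Rightarrow> rat) \<Rightarrow> 'a set \<Rightarrow> 'a \<Rightarrow> rat" where
  "hA V E w A v = (if v \<in> A \<or> WA E w A v \<ge> Wt V E w v / 2 then Wt V E w v / 2 else WA E w A v)"

definition hfun :: "'a set \<Rightarrow> ('a \<Rightarrow> 'a \<Rightarrow> bool) \<Rightarrow> ('a \<Rightarrow> 'a \<Rightarrow> rat) \<Rightarrow> 'a set \<Rightarrow> rat" where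
  "hfun V E w A = (\<Sum>v\<in>V. hA V E w A v)"

definition hmax :: "'a set \<Rightarrow> ('a \<Rightarrow> 'a \<Rightarrow> bool) \<Rightarrow> ('a \<Rightarrow> 'a \<Rightarrow> rat) \<Rightarrow> rat" where
  "hmax V E w = Max {hfun V E w X | X. X \<subseteq> V}"

definition denom :: "rat \<Rightarrow> int" where
  "denom r = snd (quotient_of r)"

definition lv :: "'a set \<Rightarrow> ('a \<Rightarrow> 'a \<Rightarrow> bool) \<Rightarrow> ('a \<Rightarrow> 'a \<Rightarrow> rat) \<Rightarrow> 'a \<Rightarrow> int" where
  "lv V E w v = Lcm (insert (denom (Wt V E w v / 2)) ((\<lambda>u. denom (w v u)) ` nbhd E v))"

definition Lconst :: "'a set \<Rightarrow> ('a \<Rightarrow> 'a \<Rightarrow> bool) \<Rightarrow> ('a \<Rightarrow> 'a \<Rightarrow> rat) \<Rightarrow> int" where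
  "Lconst V E w = Max (lv V E w ` V)"

text \<open>Number of connected components of G[A] (0 for A empty).\<close>
definition pfun :: "('a \<Rightarrow> 'a \<Rightarrow> bool) \<Rightarrow> 'a set \<Rightarrow> nat" where
  "pfun E A = card {{y\<in>A. reach_in E A x y} | x. x \<in> A}"

text \<open>Number of connected components of the spanning subgraph (V, edges with an endpoint in A).\<close>
definition qfun :: "'a set \<Rightarrow> ('a \<Rightarrow> 'a \<Rightarrow> bool) \<Rightarrow> 'a set \<Rightarrow> nat" where
  "qfun V E A = card {{y\<in>V. (\<lambda>a b. E a b \<and> (a \<in> A \<or> b \<in> A))\<^sup>*\<^sup>* x y} | x. x \<in> V}"

definition cfun :: "'a set \<Rightarrow> ('a \<Rightarrow> 'a \<Rightarrow> bool) \<Rightarrow> ('a \<Rightarrow> 'a \<Rightarrow> rat) \<Rightarrow> 'a set \<Rightarrow> rat" where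
  "cfun V E w A = (of_nat (card V) - of_nat (qfun V E A) - of_nat (pfun E A)) / of_int (Lconst V E w)"

definition ffun :: "'a set \<Rightarrow> ('a \<Rightarrow> 'a \<Rightarrow> bool) \<Rightarrow> ('a \<Rightarrow> 'a \<Rightarrow> rat) \<Rightarrow> 'a set \<Rightarrow> rat" where
  "ffun V E w A = hfun V E w A + cfun V E w A"

definition is_WPPICDS :: "'a set \<Rightarrow> ('a \<Rightarrow> 'a \<Rightarrow> bool) \<Rightarrow> ('a \<Rightarrow> 'a \<Rightarrow> rat) \<Rightarrow> 'a set \<Rightarrow> bool" where
  "is_WPPICDS V E w S \<longleftrightarrow> S \<subseteq> V \<and> (\<forall>v\<in>V - S. WA E w S v \<ge> Wt V E w v / 2) \<and> connected_set E S"

end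

theory Submission
  imports Defs
begin

lemma L_pos:
  assumes "wgraph V E w" "V \<noteq> {}"
  shows "Lconst V E w > 0"
proof -
  have fin: "finite V" using assms(1) by (simp add: wgraph_def)
  have lvpos: "lv V E w v > 0" if "v \<in> V" for v
  proof -
    have "nbhd E v \<subseteq> V" using assms(1) by (auto simp: wgraph_def nbhd_def)
    hence fn: "finite (nbhd E v)" using fin finite_subset by blast
    let ?A = "insert (denom (Wt V E w v / 2)) ((\<lambda>u. denom (w v u)) ` nbhd E v)"
    have "finite ?A" using fn by simp
    moreover have "0 \<notin> ?A"
    proof
      assume "0 \<in> ?A"
      then obtain r where "denom r = 0" by auto
      thus False using quotient_of_denom_pos'[of r] by (simp add: denom_def)
    qed
    ultimately have "Lcm ?A \<noteq> 0" using Lcm_0_iff by blast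
    moreover have "Lcm ?A \<ge> 0" by simp
    ultimately show ?thesis unfolding lv_def by linarith
  qed
  obtain v where v: "v \<in> V" using assms(2) by blast
  have "lv V E w v \<le> Lconst V E w" unfolding Lconst_def using fin v by simp
  thus ?thesis using lvpos[OF v] by linarith
qed

lemma hA_le: "hA V E w A v \<le> Wt V E w v / 2"
  unfolding hA_def by auto

lemma hfun_le: "hfun V E w A \<le> (\<Sum>v\<in>V. Wt V E w v / 2)"
  unfolding hfun_def by (rule sum_mono) (rule hA_le)

lemma hfun_V: "hfun V E w V = (\<Sum>v\<in>V. Wt V E w v / 2)"
  unfolding hfun_def hA_def by (rule sum.cong) auto

lemma hmax_eq:
  assumes "finite V"
  shows "hmax V E w = (\<Sum>v\<in>V. Wt V E w v / 2)"
proof -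
  have eq: "{hfun V E w X | X. X \<subseteq> V} = (hfun V E w) ` Pow V" by auto
  show ?thesis unfolding hmax_def
  proof (rule Max_eqI)
    show "finite {hfun V E w X | X. X \<subseteq> V}" unfolding eq using assms by simp
    show "\<And>y. y \<in> {hfun V E w X | X. X \<subseteq> V} \<Longrightarrow> y \<le> (\<Sum>v\<in>V. Wt V E w v / 2)"
      using hfun_le by blast
    show "(\<Sum>v\<in>V. Wt V E w v / 2) \<in> {hfun V E w X | X. X \<subseteq> V}"
      using hfun_V[of V E w] by (metis (mono_tags, lifting) mem_Collect_eq order_refl)
  qed
qed

lemma Wt_pos:
  assumes "wgraph V E w" "pos_weights E w" "connected_set E V" "card V \<ge> 2" "v \<in> V"
  shows "Wt V E w v > 0"
proof -
  have fin: "finite V" using assms(1) by (simp add: wgraph_def)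
  obtain y where y: "y \<in> V" "y \<noteq> v"
  proof -
    have "\<not> V \<subseteq> {v}"
    proof
      assume "V \<subseteq> {v}"
      hence "card V \<le> card {v}" by (intro card_mono) auto
      thus False using assms(4) by simp
    qed
    thus ?thesis using that by blast
  qed
  have "reach_in E V v y" using assms(3,5) y unfolding connected_set_def by blast
  then obtain u where u: "E v u" "u \<in> V" using y(2) unfolding reach_in_def
    by (metis (mono_tags, lifting) converse_rtranclpE)
  have sub: "nbhd E v \<inter> V \<subseteq> V" by blast
  have "0 < w v u" using assms(2) u by (simp add: pos_weights_def)
  also have "w v u \<le> (\<Sum>x\<in>nbhd E v \<inter> V. w v x)"
    apply (rule member_le_sum)
    using u assms(2) fin by (auto simp: nbhd_def pos_weights_def less_imp_le)
  finally show ?thesis unfolding Wt_def WA_def .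
qed

lemma comp_card_ge1:
  assumes "finite A" "A \<noteq> {}"
  shows "card {{y\<in>A. R x y} | x. x \<in> A} \<ge> 1"
proof -
  have eq: "{{y\<in>A. R x y} | x. x \<in> A} = (\<lambda>x. {y\<in>A. R x y}) ` A" by auto
  show ?thesis unfolding eq using assms by (simp add: Suc_le_eq card_gt_0_iff)
qed

lemma comp_card_1:
  assumes "card {{y\<in>A. R x y} | x. x \<in> A} = 1" "\<And>x. R x x" "x \<in> A" "y \<in> A"
  shows "R x y"
proof -
  obtain C where C: "{{y\<in>A. R x y} | x. x \<in> A} = {C}" using assms(1) card_1_singletonE by blast
  have "{z\<in>A. R x z} \<in> {{y\<in>A. R x y} | x. x \<in> A}" using assms(3) by blast
  hence 1: "{z\<in>A. R x z} = C" using C by simp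
  have "{z\<in>A. R y z} \<in> {{y\<in>A. R x y} | x. x \<in> A}" using assms(4) by blast
  hence 2: "{z\<in>A. R y z} = C" using C by simp
  have "y \<in> {z\<in>A. R y z}" using assms(2,4) by simp
  hence "y \<in> {z\<in>A. R x z}" using 1 2 by simp
  thus ?thesis by simp
qed

lemma comp_all:
  assumes "A \<noteq> {}" "\<And>x y. x \<in> A \<Longrightarrow> y \<in> A \<Longrightarrow> R x y"
  shows "card {{y\<in>A. R x y} | x. x \<in> A} = 1"
proof -
  have e: "\<And>x. x \<in> A \<Longrightarrow> {y\<in>A. R x y} = A" using assms(2) by blast
  have "{{y\<in>A. R x y} | x. x \<in> A} = {A}"
  proof
    show "{{y\<in>A. R x y} | x. x \<in> A} \<subseteq> {A}" using e by blast
    show "{A} \<subseteq> {{y\<in>A. R x y} | x. x \<in> A}" using e assms(1) by blast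
  qed
  thus ?thesis by simp
qed

lemma q_empty:
  assumes "finite V"
  shows "qfun V E {} = card V"
proof -
  have r0: "(\<lambda>a b. E a b \<and> (a \<in> {} \<or> b \<in> {})) = (\<lambda>a b. False)" by simp
  have r1: "(\<lambda>a b. False)\<^sup>*\<^sup>* x y \<longleftrightarrow> x = y" for x y :: 'a
  proof
    assume "(\<lambda>a b. False)\<^sup>*\<^sup>* x y" then show "x = y" by (rule converse_rtranclpE) auto
  qed simp
  have r: "(\<lambda>a b. E a b \<and> (a \<in> {} \<or> b \<in> {}))\<^sup>*\<^sup>* = (=)"
    unfolding r0 using r1 by blast
  have "{{y\<in>V. (\<lambda>a b. E a b \<and> (a \<in> {} \<or> b \<in> {}))\<^sup>*\<^sup>* x y} | x. x \<in> V} = (\<lambda>x. {x}) ` V"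
    unfolding r by auto
  moreover have "card ((\<lambda>x. {x}) ` V) = card V" by (rule card_image) (auto simp: inj_on_def)
  ultimately show ?thesis unfolding qfun_def by simp
qed

lemma p_empty: "pfun E {} = 0"
  unfolding pfun_def by simp

lemma sym_rtranclp:
  assumes "\<And>a b. R a b \<Longrightarrow> R b a" "R\<^sup>*\<^sup>* x y"
  shows "R\<^sup>*\<^sup>* y x"
  using assms(2)
proof (induction rule: rtranclp_induct)
  case base then show ?case by simp
next
  case (step y z)
  show ?case by (rule converse_rtranclp_into_rtranclp[OF assms(1)[OF step(2)] step.IH])
qed

theorem mainTheorem19:
  fixes V :: "'a set" and E :: "'a \<Rightarrow> 'a \<Rightarrow> bool" and w :: "'a \<Rightarrow> 'a \<Rightarrow> rat"
    and S :: "'a set"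
  assumes "wgraph V E w" and "pos_weights E w" and "connected_set E V" and "card V \<ge> 2"
    and "S \<subseteq> V"
  shows "is_WPPICDS V E w S \<longleftrightarrow>
         ffun V E w S = hmax V E w + (of_nat (card V) - 2) / of_int (Lconst V E w)"
proof -
  have fin: "finite V" using assms(1) by (simp add: wgraph_def)
  have Vne: "V \<noteq> {}" using assms(3) by (simp add: connected_set_def)
  have finS: "finite S" using fin assms(5) finite_subset by blast
  define L where "L = Lconst V E w"
  have Lpos: "(of_int L :: rat) > 0" using L_pos[OF assms(1) Vne] L_def by simp
  define R where "R = (\<lambda>a b. E a b \<and> (a \<in> S \<or> b \<in> S))"
  have hm: "hmax V E w = (\<Sum>v\<in>V. Wt V E w v / 2)" using hmax_eq[OF fin] .
  have c_def': "cfun V E w S = (of_nat (card V) - of_nat (qfun V E S) - of_nat (pfun E S)) / of_int L"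
    unfolding cfun_def L_def ..
  have hdom: "hfun V E w S = hmax V E w \<longleftrightarrow> (\<forall>v\<in>V - S. WA E w S v \<ge> Wt V E w v / 2)"
  proof
    assume h: "hfun V E w S = hmax V E w"
    have "(\<Sum>v\<in>V. Wt V E w v / 2 - hA V E w S v) = 0"
      using h hm unfolding hfun_def by (simp add: sum_subtractf)
    moreover have nn: "\<forall>v\<in>V. 0 \<le> Wt V E w v / 2 - hA V E w S v" using hA_le[of V E w S] by (simp del: hA_le)
    ultimately have z: "\<forall>v\<in>V. Wt V E w v / 2 - hA V E w S v = 0"
      using sum_nonneg_eq_0_iff[OF fin, of "\<lambda>v. Wt V E w v / 2 - hA V E w S v"] nn by blast
    show "\<forall>v\<in>V - S. WA E w S v \<ge> Wt V E w v / 2"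
    proof (intro ballI)
      fix v assume v: "v \<in> V - S"
      show "WA E w S v \<ge> Wt V E w v / 2"
      proof (rule ccontr)
        assume "\<not> ?thesis"
        hence "hA V E w S v = WA E w S v" "WA E w S v < Wt V E w v / 2" using v by (auto simp: hA_def)
        thus False using z v by auto
      qed
    qed
  next
    assume d: "\<forall>v\<in>V - S. WA E w S v \<ge> Wt V E w v / 2"
    show "hfun V E w S = hmax V E w" unfolding hm hfun_def
      by (rule sum.cong) (use d in \<open>auto simp: hA_def\<close>)
  qed
  have hle: "hfun V E w S \<le> hmax V E w" unfolding hm by (rule hfun_le)
  have reach_refl: "\<And>A x. reach_in E A x x" by (simp add: reach_in_def)
  show ?thesis
  proof
    assume W: "is_WPPICDS V E w S"
    hence dom: "\<forall>v\<in>V - S. WA E w S v \<ge> Wt V E w v / 2" and con: "connected_set E S"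
      by (auto simp: is_WPPICDS_def)
    have Sne: "S \<noteq> {}" using con by (simp add: connected_set_def)
    have p1: "pfun E S = 1" unfolding pfun_def
      by (rule comp_all) (use Sne con in \<open>auto simp: connected_set_def\<close>)
    obtain s0 where s0: "s0 \<in> S" using Sne by blast
    have Rsym: "\<And>a b. R a b \<Longrightarrow> R b a" using assms(1) by (auto simp: R_def wgraph_def)
    have toS: "R\<^sup>*\<^sup>* x s0" if x: "x \<in> V" for x
    proof -
      obtain s where s: "s \<in> S" "R\<^sup>*\<^sup>* x s"
      proof (cases "x \<in> S")
        case True then show ?thesis using that by blast
      next
        case False
        have "Wt V E w x > 0" using Wt_pos[OF assms(1-4) x] .
        moreover have "WA E w S x \<ge> Wt V E w x / 2" using dom x False by blast
        ultimately have "WA E w S x > 0" by linarith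
        hence "nbhd E x \<inter> S \<noteq> {}" unfolding WA_def by auto
        then obtain s where "E x s" "s \<in> S" by (auto simp: nbhd_def)
        hence "R x s" by (simp add: R_def)
        thus ?thesis using that \<open>s \<in> S\<close> by blast
      qed
      have "reach_in E S s s0" using con s s0 by (auto simp: connected_set_def)
      hence "R\<^sup>*\<^sup>* s s0" unfolding reach_in_def
        by (rule rtranclp_mono[THEN predicate2D, rotated]) (auto simp: R_def)
      thus ?thesis using s by simp
    qed
    have q1: "qfun V E S = 1" unfolding qfun_def
    proof (rule comp_all[OF Vne])
      fix x y assume "x \<in> V" "y \<in> V"
      hence "R\<^sup>*\<^sup>* x s0" "R\<^sup>*\<^sup>* s0 y" using toS sym_rtranclp[of R y s0, OF Rsym] by blast+
      hence "R\<^sup>*\<^sup>* x y" by (rule rtranclp_trans)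
      thus "(\<lambda>a b. E a b \<and> (a \<in> S \<or> b \<in> S))\<^sup>*\<^sup>* x y" unfolding R_def .
    qed
    have "hfun V E w S = hmax V E w" using hdom dom by simp
    thus "ffun V E w S = hmax V E w + (of_nat (card V) - 2) / of_int (Lconst V E w)"
      unfolding ffun_def c_def' p1 q1 L_def by simp
  next
    assume F: "ffun V E w S = hmax V E w + (of_nat (card V) - 2) / of_int (Lconst V E w)"
    have pq: "qfun V E S + pfun E S \<ge> 2"
    proof (cases "S = {}")
      case True then show ?thesis using q_empty[OF fin] p_empty assms(4) by simp
    next
      case False
      have "qfun V E S \<ge> 1" unfolding qfun_def by (rule comp_card_ge1[OF fin Vne])
      moreover have "pfun E S \<ge> 1" unfolding pfun_def by (rule comp_card_ge1[OF finS False])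
      ultimately show ?thesis by simp
    qed
    have cle: "cfun V E w S \<le> (of_nat (card V) - 2) / of_int L" unfolding c_def'
    proof (rule divide_right_mono)
      have "(of_nat 2::rat) \<le> of_nat (qfun V E S + pfun E S)" using pq of_nat_le_iff by blast
      thus "of_nat (card V) - of_nat (qfun V E S) - of_nat (pfun E S) \<le> (of_nat (card V) - 2 :: rat)"
        by simp
      show "0 \<le> (of_int L :: rat)" using Lpos by simp
    qed
    have hq: "hfun V E w S = hmax V E w" and cq: "cfun V E w S = (of_nat (card V) - 2) / of_int L"
      using F hle cle unfolding ffun_def L_def by linarith+
    have dom: "\<forall>v\<in>V - S. WA E w S v \<ge> Wt V E w v / 2" using hdom hq by simp
    have Sne: "S \<noteq> {}"
    proof
      assume "S = {}"
      obtain v where v: "v \<in> V" using Vne by blast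
      have "Wt V E w v > 0" using Wt_pos[OF assms(1-4) v] .
      moreover have "WA E w S v = 0" using \<open>S = {}\<close> by (simp add: WA_def)
      moreover have "WA E w S v \<ge> Wt V E w v / 2" using dom v \<open>S = {}\<close> by blast
      ultimately show False by linarith
    qed
    have "(of_nat (card V) - of_nat (qfun V E S) - of_nat (pfun E S)) = (of_nat (card V) - 2 :: rat)"
      using cq Lpos unfolding c_def' by (simp add: divide_cancel_right)
    hence "qfun V E S + pfun E S = 2" by linarith
    moreover have "qfun V E S \<ge> 1" unfolding qfun_def by (rule comp_card_ge1[OF fin Vne])
    moreover have "pfun E S \<ge> 1" unfolding pfun_def by (rule comp_card_ge1[OF finS Sne])
    ultimately have p1: "pfun E S = 1" by linarith
    have con: "connected_set E S" unfolding connected_set_def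
      using Sne comp_card_1[of S "reach_in E S", OF p1[unfolded pfun_def] reach_refl] by blast
    show "is_WPPICDS V E w S" unfolding is_WPPICDS_def using assms(5) dom con by blast
  qed
qed

end
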